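(* Let $F$ be a sensori-computational device and $N\subseteq Y(F)$, and suppose every nonempty string $s_1s_2\cdots s_k\in\mathcal{L}(F)$ has $s_1\in Y(F)\setminus N$. If there exists a sensori-computational device that output simulates $F$ modulo the $N$-pump $P_N$ (with $L=\mathcal{L}(F)$, $\Sigma=Y(F)$), then there exists a sensori-computational device that output simulates $F$ modulo the $N$-shrink $\pi_N$ (with $L=\mathcal{L}(F)$, $\Sigma=Y(F)$).
   Context: A sensori-computational device is a 6-tuple $F=(V,V_0,Y,\tau,C,c)$ where $V$ is a non-empty finite set of states, $V_0\subseteq V$ a non-empty set of initial states, $Y=Y(F)$ a finite set of observations, $\tau:V\times V\to\mathcal{P}(Y)$, $C$ a set of outputs, $c:V\to\mathcal{P}(C)\setminus\{\emptyset\}$. A string $y_1\cdots y_n$ reaches $w$ from $v$ if there are states $w_0=v,\dots,w_n=w$ with $y_i\in\tau(w_{i-1},w_i)$; $\mathcal{R}_F(s)$ is the set of states reached by $s$ from some initial state; $\mathcal{L}(F)=\{s\in Y^*:\mathcal{R}_F(s)\ne\emptyset\}$; $\mathcal{C}_F(s)=\bigcup_{v\in\mathcal{R}_F(s)}c(v)$. For a relation $R\subseteq A\times B$ between sets of strings, $F'$ output simulates $F$ modulo $R$ if for every $s\in\mathcal{L}(F)$: (1) some $t\in\mathcal{L}(F')$ has $s\,R\,t$; (2) every $t\in B$ with $s\,R\,t$ satisfies $t\in\mathcal{L}(F')$ and $\mathcal{C}_F(s)\supseteq\mathcal{C}_{F'}(t)$. For a set $\Sigma$, $L\subseteq\Sigma^*$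 and $N\subseteq\Sigma$: the $N$-shrink is the function $\pi_N:L\to(\Sigma\setminus N)^*$ deleting every occurrence of symbols of $N$ from a string (so $\pi_N(\epsilon)=\epsilon$). The $N$-pump is the relation $P_N\subseteq L\times\Sigma^*$ defined as the smallest relation such that $\epsilon\,P_N\,\epsilon$, $s\,P_N\,s$ for every $s\in L$, and whenever $s\,P_N\,t_1\cdots t_\ell$, then $s\,P_N\,t_1\cdots t_k\,b\,t_{k+1}\cdots t_\ell$ for every $b\in N$ and $k\in\{1,\dots,\ell\}$. *)

theory Defs
  imports Main
begin

text \<open>A sensori-computational device F = (V, V0, Y, tau, C, c).
  States of type 'v, observations of type 'y, outputs of type 'c.\<close>

record ('v, 'y, 'c) scd =
  states :: "'v set"
  init   :: "'v set"
  obs    :: "'y set"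
  trans  :: "'v \<Rightarrow> 'v \<Rightarrow> 'y set"
  outs   :: "'c set"
  out    :: "'v \<Rightarrow> 'c set"

definition is_scd :: "('v, 'y, 'c) scd \<Rightarrow> bool" where
  "is_scd F \<longleftrightarrow> finite (states F) \<and> states F \<noteq> {}
     \<and> init F \<subseteq> states F \<and> init F \<noteq> {}
     \<and> finite (obs F)
     \<and> (\<forall>v\<in>states F. \<forall>w\<in>states F. trans F v w \<subseteq> obs F)
     \<and> (\<forall>v\<in>states F. out F v \<subseteq> outs F \<and> out F v \<noteq> {})"

fun reaches :: "('v, 'y, 'c) scd \<Rightarrow> 'v \<Rightarrow> 'y list \<Rightarrow> 'v \<Rightarrow> bool" where
  "reaches F v [] w \<longleftrightarrow> v = w"
| "reaches F v (y # s) w \<longleftrightarrow> (\<exists>u\<in>states F. y \<in> trans F v u \<and> reaches F u s w)"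

definition reached :: "('v, 'y, 'c) scd \<Rightarrow> 'y list \<Rightarrow> 'v set" where
  "reached F s = {w. \<exists>v\<in>init F. reaches F v s w}"

definition lang :: "('v, 'y, 'c) scd \<Rightarrow> 'y list set" where
  "lang F = {s. reached F s \<noteq> {}}"

definition outputs :: "('v, 'y, 'c) scd \<Rightarrow> 'y list \<Rightarrow> 'c set" where
  "outputs F s = (\<Union>v\<in>reached F s. out F v)"

definition output_simulates ::
  "('w, 'y, 'c) scd \<Rightarrow> ('v, 'y, 'c) scd \<Rightarrow> ('y list \<Rightarrow> 'y list \<Rightarrow> bool) \<Rightarrow> bool" where
  "output_simulates F' F R \<longleftrightarrow>
     (\<forall>s\<in>lang F. (\<exists>t\<in>lang F'. R s t)
        \<and> (\<forall>t. R s t \<longrightarrow> t \<in> lang F' \<and> outputs F' t \<subseteq> outputs F s))"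

definition shrink :: "'y set \<Rightarrow> 'y list \<Rightarrow> 'y list" where
  "shrink N s = filter (\<lambda>y. y \<notin> N) s"

definition shrink_rel :: "'y list set \<Rightarrow> 'y set \<Rightarrow> 'y list \<Rightarrow> 'y list \<Rightarrow> bool" where
  "shrink_rel L N s t \<longleftrightarrow> s \<in> L \<and> t = shrink N s"

inductive pump :: "'y list set \<Rightarrow> 'y set \<Rightarrow> 'y list \<Rightarrow> 'y list \<Rightarrow> bool"
  for L :: "'y list set" and N :: "'y set" where
  pump_eps: "pump L N [] []"
| pump_refl: "s \<in> L \<Longrightarrow> pump L N s s"
| pump_ins: "pump L N s t \<Longrightarrow> b \<in> N \<Longrightarrow> 1 \<le> k \<Longrightarrow> k \<le> length t
     \<Longrightarrow> pump L N s (take k t @ b # drop k t)"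

end

theory Submission
  imports Defs
begin


inductive ins :: "'y set \<Rightarrow> 'y list \<Rightarrow> 'y list \<Rightarrow> bool" for N :: "'y set" where
  ins_nil: "ins N [] []"
| ins_cons: "ins N s w \<Longrightarrow> ins N (a#s) (a#w)"
| ins_add: "ins N s w \<Longrightarrow> b \<in> N \<Longrightarrow> ins N s (b#w)"

lemma ins_shrink: "ins N s w \<Longrightarrow> shrink N s = shrink N w"
  by (induction rule: ins.induct) (auto simp: shrink_def)

lemma ins_nil_inv: "ins N s [] \<Longrightarrow> s = []"
  by (cases rule: ins.cases) auto

lemma ins_refl: "ins N s s"
  by (induction s) (auto intro: ins.intros)

lemma ins_nil_lists: "set u \<subseteq> N \<Longrightarrow> ins N [] u"
  by (induction u) (auto intro: ins.intros)

lemma ins_trans: "ins N w z \<Longrightarrow> ins N s w \<Longrightarrow> ins N s z"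
proof (induction w z arbitrary: s rule: ins.induct)
  case ins_nil thus ?case using ins_nil_inv ins.ins_nil by blast
next
  case (ins_cons w z a)
  from ins_cons.prems ins_cons.IH show ?case
    by (cases rule: ins.cases) (auto intro: ins.intros)
next
  case (ins_add w z b)
  thus ?case by (auto intro: ins.intros)
qed

lemma ins_pair: "shrink N s1 = shrink N s2 \<Longrightarrow> \<exists>w. ins N s1 w \<and> ins N s2 w"
proof (induction "length s1 + length s2" arbitrary: s1 s2 rule: less_induct)
  case less
  show ?case
  proof (cases "\<exists>b r. s1 = b#r \<and> b \<in> N")
    case True
    then obtain b r where b: "s1 = b#r" "b \<in> N" by blast
    then have "shrink N r = shrink N s2" using less.prems by (simp add: shrink_def)
    with less.hyps[of r s2] b obtain w where "ins N r w" "ins N s2 w" by auto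
    then show ?thesis using b by (auto intro: ins.intros)
  next
    case F1: False
    show ?thesis
    proof (cases "\<exists>b r. s2 = b#r \<and> b \<in> N")
      case True
      then obtain b r where b: "s2 = b#r" "b \<in> N" by blast
      then have "shrink N s1 = shrink N r" using less.prems by (simp add: shrink_def)
      with less.hyps[of s1 r] b obtain w where "ins N s1 w" "ins N r w" by auto
      then show ?thesis using b by (auto intro: ins.intros)
    next
      case F2: False
      show ?thesis
      proof (cases s1)
        case Nil
        then show ?thesis using F2 less.prems
          by (cases s2) (auto simp: shrink_def intro: ins.intros)
      next
        case (Cons a r)
        show ?thesis
        proof (cases s2)
          case Nil
          then show ?thesis using F1 Cons less.prems by (auto simp: shrink_def)
        next
          case (Cons c q)
          with \<open>s1 = a#r\<close> F1 F2 less.prems have "a = c" "shrink N r = shrink N q"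
            by (auto simp: shrink_def)
          with less.hyps[of r q] \<open>s1 = a#r\<close> Cons obtain w where "ins N r w" "ins N q w" by auto
          then show ?thesis using \<open>s1 = a#r\<close> Cons \<open>a = c\<close> by (auto intro: ins.intros)
        qed
      qed
    qed
  qed
qed

lemma pump_insl: "ins N s' w' \<Longrightarrow> pump L N s (a#x@s') \<Longrightarrow> pump L N s (a#x@w')"
proof (induction s' w' arbitrary: x rule: ins.induct)
  case ins_nil thus ?case by simp
next
  case (ins_cons s' w' c)
  from ins_cons.prems have "pump L N s (a#(x@[c])@s')" by simp
  from ins_cons.IH[OF this] show ?case by simp
next
  case (ins_add s' w' b)
  from ins_add.IH[OF ins_add.prems] have p: "pump L N s (a#x@w')" .
  have "pump L N s (take (Suc (length x)) (a#x@w') @ b # drop (Suc (length x)) (a#x@w'))"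
    by (rule pump_ins[OF p \<open>b \<in> N\<close>]) auto
  then show ?case by simp
qed

lemma ins_common: "finite S \<Longrightarrow> \<forall>s\<in>S. shrink N s = shrink N x \<Longrightarrow>
   \<exists>w. shrink N w = shrink N x \<and> (\<forall>s\<in>S. ins N s w)"
proof (induction S rule: finite_induct)
  case empty thus ?case by auto
next
  case (insert s S)
  then obtain w where w: "shrink N w = shrink N x" "\<forall>s\<in>S. ins N s w" by auto
  with insert.prems obtain z where z: "ins N w z" "ins N s z" using ins_pair[of N w s] by auto
  have "shrink N z = shrink N x" using ins_shrink[OF z(1)] w by simp
  then show ?case using z w ins_trans by blast
qed

lemma common:
  assumes "finite S" "\<forall>s\<in>S. s \<in> L \<and> shrink N s = shrink N x"
    "\<forall>s\<in>L. s \<noteq> [] \<longrightarrow> hd s \<notin> N" "x \<in> L"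
  shows "\<exists>w. \<forall>s\<in>S. pump L N s w"
proof (cases "shrink N x = []")
  case True
  have "s = []" if "s \<in> S" for s
  proof (rule ccontr)
    assume "s \<noteq> []"
    then obtain a r where "s = a#r" by (cases s) auto
    moreover have "s \<in> L" "shrink N s = []" using that assms(2) True by auto
    ultimately show False using assms(3) by (auto simp: shrink_def)
  qed
  then show ?thesis by (auto intro: pump.intros)
next
  case False
  then obtain a x' where x: "x = a#x'" by (cases x) (auto simp: shrink_def)
  with assms(3,4) have aN: "a \<notin> N" by auto
  have hs: "s = a # tl s \<and> shrink N (tl s) = shrink N x'" if "s \<in> S" for s
  proof -
    have "s \<noteq> []" using that assms(2) False by (auto simp: shrink_def)
    then obtain c r where sc: "s = c#r" by (cases s) auto
    with that assms(2,3) have "c \<notin> N" by auto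
    with sc that assms(2) x aN show ?thesis by (auto simp: shrink_def)
  qed
  obtain w' where w': "\<forall>s\<in>tl ` S. ins N s w'"
    using ins_common[of "tl ` S" N x'] assms(1) hs by auto
  have "pump L N s (a#w')" if "s \<in> S" for s
  proof -
    have "pump L N s (a#[]@tl s)" using hs[OF that] that assms(2) pump_refl
      by (metis append_Nil)
    from pump_insl[OF _ this] w' that show ?thesis by auto
  qed
  then show ?thesis by blast
qed



lemma reaches_append: "reaches F v (s@s') w \<longleftrightarrow> (\<exists>u. reaches F v s u \<and> reaches F u s' w)"
  by (induction s arbitrary: v) auto

lemma reaches_states: "reaches F v s w \<Longrightarrow> v \<in> states F \<Longrightarrow> w \<in> states F"
  by (induction s arbitrary: v) auto

lemma reaches_obs: "is_scd F \<Longrightarrow> reaches F v s w \<Longrightarrow> v \<in> states F \<Longrightarrow> set s \<subseteq> obs F"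
  by (induction s arbitrary: v) (auto simp: is_scd_def, blast)

lemma reached_states: "is_scd F \<Longrightarrow> reached F s \<subseteq> states F"
  unfolding reached_def is_scd_def using reaches_states by fast

definition rs :: "('v, 'y, 'c) scd \<Rightarrow> 'v set \<Rightarrow> 'y list \<Rightarrow> 'v set" where
  "rs F A s = {w. \<exists>v\<in>A. reaches F v s w}"

lemma reached_append: "reached F (s@s') = rs F (reached F s) s'"
  unfolding reached_def rs_def reaches_append by blast

definition Rfam :: "('v, 'y, 'c) scd \<Rightarrow> 'y set \<Rightarrow> 'y list \<Rightarrow> 'v set set" where
  "Rfam F N t = {reached F s | s. shrink N s = t}"

definition stepf :: "('v, 'y, 'c) scd \<Rightarrow> 'y set \<Rightarrow> 'v set set \<Rightarrow> 'y \<Rightarrow> 'v set set" where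
  "stepf F N AA y = {rs F A (y#u) | A u. A \<in> AA \<and> set u \<subseteq> N}"

lemma shrink_snoc_decomp:
  "shrink N s = t@[y] \<Longrightarrow> y \<notin> N \<Longrightarrow> \<exists>s1 u. s = s1@y#u \<and> shrink N s1 = t \<and> set u \<subseteq> N"
proof (induction s rule: rev_induct)
  case Nil thus ?case by (simp add: shrink_def)
next
  case (snoc c s)
  show ?case
  proof (cases "c \<in> N")
    case True
    then have "shrink N s = t@[y]" using snoc.prems by (simp add: shrink_def)
    with snoc.IH snoc.prems obtain s1 u where "s = s1@y#u" "shrink N s1 = t" "set u \<subseteq> N" by auto
    then show ?thesis using True by (intro exI[of _ s1] exI[of _ "u@[c]"]) auto
  next
    case False
    then have "shrink N s @ [c] = t@[y]" using snoc.prems by (simp add: shrink_def)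
    then show ?thesis by (intro exI[of _ s] exI[of _ "[]"]) auto
  qed
qed

lemma Rfam_snoc: "y \<notin> N \<Longrightarrow> Rfam F N (t@[y]) = stepf F N (Rfam F N t) y"
proof
  assume y: "y \<notin> N"
  show "Rfam F N (t@[y]) \<subseteq> stepf F N (Rfam F N t) y"
  proof
    fix A assume "A \<in> Rfam F N (t@[y])"
    then obtain s where s: "A = reached F s" "shrink N s = t@[y]" unfolding Rfam_def by auto
    then obtain s1 u where su: "s = s1@y#u" "shrink N s1 = t" "set u \<subseteq> N"
      using shrink_snoc_decomp y by metis
    have A: "A = rs F (reached F s1) (y#u)" using s su by (simp add: reached_append)
    have B: "reached F s1 \<in> Rfam F N t" using su unfolding Rfam_def by auto
    show "A \<in> stepf F N (Rfam F N t) y" unfolding stepf_def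
      using A B su(3) by blast
  qed
next
  assume y: "y \<notin> N"
  show "stepf F N (Rfam F N t) y \<subseteq> Rfam F N (t@[y])"
  proof
    fix A assume "A \<in> stepf F N (Rfam F N t) y"
    then obtain B u where Bu: "A = rs F B (y#u)" "B \<in> Rfam F N t" "set u \<subseteq> N"
      unfolding stepf_def by blast
    then obtain s1 where s1: "B = reached F s1" "shrink N s1 = t" unfolding Rfam_def by blast
    have sh: "shrink N (s1@y#u) = t@[y]" using s1 Bu y
      by (auto simp: shrink_def filter_empty_conv)
    have "A = reached F (s1@y#u)" using Bu s1 by (simp add: reached_append)
    then show "A \<in> Rfam F N (t@[y])" unfolding Rfam_def using sh by blast
  qed
qed

lemma Rfam_sub: "is_scd F \<Longrightarrow> Rfam F N t \<in> Pow (Pow (states F))"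
  unfolding Rfam_def using reached_states by blast

definition outI :: "('v, 'y, 'c) scd \<Rightarrow> 'v set set \<Rightarrow> 'c set" where
  "outI F AA = (\<Inter>A\<in>AA-{{}}. \<Union>v\<in>A. out F v)"

definition out2 :: "('v, 'y, 'c) scd \<Rightarrow> 'v set set \<Rightarrow> 'c set" where
  "out2 F AA = (if AA - {{}} \<noteq> {} \<and> outI F AA \<noteq> {} then outI F AA
      else out F (SOME v. v \<in> states F))"

definition F2 :: "('v, 'y, 'c) scd \<Rightarrow> 'y set \<Rightarrow> ('v set set, 'y, 'c) scd" where
  "F2 F N = \<lparr>states = Pow (Pow (states F)), init = {Rfam F N []}, obs = obs F,
     trans = (\<lambda>AA BB. {y \<in> obs F - N. BB = stepf F N AA y}), outs = outs F, out = out2 F\<rparr>"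

lemma F2_scd: assumes "is_scd F" shows "is_scd (F2 F N)"
proof -
  have "out2 F AA \<subseteq> outs F \<and> out2 F AA \<noteq> {}" if "AA \<in> Pow (Pow (states F))" for AA
  proof (cases "AA - {{}} \<noteq> {} \<and> outI F AA \<noteq> {}")
    case True
    then obtain A where A: "A \<in> AA - {{}}" by auto
    have i1: "outI F AA \<subseteq> (\<Union>v\<in>A. out F v)" unfolding outI_def using A by blast
    have "A \<subseteq> states F" using A that by auto
    then have "(\<Union>v\<in>A. out F v) \<subseteq> outs F" using assms unfolding is_scd_def by blast
    with i1 have "outI F AA \<subseteq> outs F" by blast
    then show ?thesis using True by (simp add: out2_def)
  next
    case False
    have "\<exists>v. v \<in> states F" using assms by (auto simp: is_scd_def)
    then have "(SOME v. v \<in> states F) \<in> states F" by (rule someI_ex)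
    then have "out F (SOME v. v \<in> states F) \<subseteq> outs F \<and> out F (SOME v. v \<in> states F) \<noteq> {}"
      using assms unfolding is_scd_def by blast
    then show ?thesis using False unfolding out2_def by presburger
  qed
  then show ?thesis using assms Rfam_sub[OF assms]
    unfolding is_scd_def F2_def by (simp add: finite_Pow_iff) blast
qed

lemma reached_F2: assumes "is_scd F" shows "set t \<subseteq> obs F - N \<Longrightarrow> reached (F2 F N) t = {Rfam F N t}"
proof (induction t rule: rev_induct)
  case Nil thus ?case by (simp add: reached_def F2_def)
next
  case (snoc y t)
  then have IH: "reached (F2 F N) t = {Rfam F N t}" and y: "y \<in> obs F" "y \<notin> N" by auto
  have "reached (F2 F N) (t@[y]) = rs (F2 F N) {Rfam F N t} [y]"
    by (simp add: reached_append IH)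
  also have "\<dots> = {Rfam F N (t@[y])}"
    using y Rfam_snoc[OF y(2)] Rfam_sub[OF assms, where t="t@[y]" and N=N] by (auto simp: rs_def F2_def)
  finally show ?case .
qed



lemma to_nat:
  fixes G :: "('a, 'y, 'c) scd"
  assumes G: "is_scd G"
  shows "\<exists>G' :: (nat, 'y, 'c) scd. is_scd G' \<and> lang G' = lang G \<and> (\<forall>t. outputs G' t = outputs G t)"
proof -
  define S where "S = {0..<card (states G)}"
  have finG: "finite (states G)" using G unfolding is_scd_def by simp
  obtain f where f: "bij_betw f S (states G)"
    using ex_bij_betw_nat_finite[OF finG] unfolding S_def by blast
  have fS: "f ` S = states G" and inj: "inj_on f S" using f by (auto simp: bij_betw_def)
  define G' where "G' = (\<lparr>states = S, init = {i\<in>S. f i \<in> init G}, obs = obs G,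
      trans = (\<lambda>i j. scd.trans G (f i) (f j)), outs = outs G, out = (\<lambda>i. out G (f i))\<rparr>
      :: (nat, 'y, 'c) scd)"
  have R: "i \<in> S \<Longrightarrow> reaches G' i s j \<longleftrightarrow> (j \<in> S \<and> reaches G (f i) s (f j))" for i s j
  proof (induction s arbitrary: i)
    case Nil
    then show ?case using inj by (auto simp: G'_def inj_on_def)
  next
    case (Cons y s)
    have "reaches G' i (y#s) j \<longleftrightarrow> (\<exists>u\<in>S. y \<in> scd.trans G (f i) (f u) \<and> j \<in> S \<and> reaches G (f u) s (f j))"
      using Cons.IH by (auto simp: G'_def)
    also have "\<dots> \<longleftrightarrow> j \<in> S \<and> (\<exists>u'\<in>states G. y \<in> scd.trans G (f i) u' \<and> reaches G u' s (f j))"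
      unfolding fS[symmetric] by auto
    finally show ?case by simp
  qed
  have reached: "reached G s = f ` reached G' s" for s
  proof
    show "reached G s \<subseteq> f ` reached G' s"
    proof
      fix w assume "w \<in> reached G s"
      then obtain v where v: "v \<in> init G" "reaches G v s w" unfolding reached_def by blast
      have vS: "v \<in> states G" using v G by (auto simp: is_scd_def)
      then have wS: "w \<in> states G" using reaches_states v by metis
      obtain i where i: "i \<in> S" "f i = v" using vS fS by (metis imageE)
      obtain j where j: "j \<in> S" "f j = w" using wS fS by (metis imageE)
      have "reaches G' i s j" using R[OF i(1)] i j v by simp
      moreover have "i \<in> init G'" using i v by (simp add: G'_def)
      ultimately show "w \<in> f ` reached G' s" using j unfolding reached_def by blast
    qed
  next
    show "f ` reached G' s \<subseteq> reached G s"
    proof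
      fix w assume "w \<in> f ` reached G' s"
      then obtain i j where ij: "i \<in> init G'" "reaches G' i s j" "w = f j" unfolding reached_def by blast
      then have "i \<in> S" "f i \<in> init G" by (auto simp: G'_def)
      then show "w \<in> reached G s" unfolding reached_def using R[OF \<open>i \<in> S\<close>] ij by auto
    qed
  qed
  have lang: "lang G' = lang G" unfolding lang_def using reached by auto
  have outp: "outputs G' t = outputs G t" for t
    unfolding outputs_def reached by (simp add: G'_def)
  have "is_scd G'"
  proof -
    have "S \<noteq> {}" using fS G by (auto simp: is_scd_def)
    moreover have "{i\<in>S. f i \<in> init G} \<noteq> {}"
    proof -
      obtain v where "v \<in> init G" using G unfolding is_scd_def by blast
      moreover then have "v \<in> states G" using G unfolding is_scd_def by blast
      ultimately obtain i where "i \<in> S" "f i = v" using fS by (metis imageE)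
      then show ?thesis using \<open>v \<in> init G\<close> by blast
    qed
    moreover have "\<forall>i\<in>S. \<forall>j\<in>S. scd.trans G (f i) (f j) \<subseteq> obs G" using G fS unfolding is_scd_def by blast
    moreover have "\<forall>i\<in>S. out G (f i) \<subseteq> outs G \<and> out G (f i) \<noteq> {}" using G fS unfolding is_scd_def by blast
    ultimately show ?thesis using G unfolding G'_def is_scd_def S_def by (simp add: subset_iff)
  qed
  then show ?thesis using lang outp by blast
qed

theorem lemma5:
  fixes F :: "('v, 'y, 'c) scd" and N :: "'y set" and F1 :: "('w, 'y, 'c) scd"
  assumes "is_scd F"
    and "N \<subseteq> obs F"
    and "\<forall>s\<in>lang F. s \<noteq> [] \<longrightarrow> hd s \<in> obs F - N"
    and "is_scd F1"
    and "output_simulates F1 F (pump (lang F) N)"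
  shows "\<exists>F2 :: (nat, 'y, 'c) scd. is_scd F2 \<and> output_simulates F2 F (shrink_rel (lang F) N)"
proof -
  have hdN: "\<forall>s\<in>lang F. s \<noteq> [] \<longrightarrow> hd s \<notin> N" using assms(3) by blast
  have sim: "output_simulates (F2 F N) F (shrink_rel (lang F) N)"
    unfolding output_simulates_def
  proof (intro ballI conjI allI impI)
    fix s assume sL: "s \<in> lang F"
    define t where "t = shrink N s"
    have "set s \<subseteq> obs F"
    proof -
      from sL obtain v w where "v \<in> init F" "reaches F v s w" unfolding lang_def reached_def by blast
      then show ?thesis using reaches_obs[OF assms(1)] assms(1) unfolding is_scd_def by blast
    qed
    then have tobs: "set t \<subseteq> obs F - N" unfolding t_def shrink_def by auto
    have rt: "reached (F2 F N) t = {Rfam F N t}" using reached_F2[OF assms(1) tobs] .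
    then have tL: "t \<in> lang (F2 F N)" unfolding lang_def by simp
    have outt: "outputs (F2 F N) t = out2 F (Rfam F N t)"
      using rt unfolding outputs_def by (simp add: F2_def)
    have Ain: "reached F s \<in> Rfam F N t - {{}}"
      using sL unfolding Rfam_def t_def lang_def by auto
    define AA where "AA = Rfam F N t - {{}}"
    have finAA: "finite AA"
    proof -
      have "AA \<subseteq> Pow (states F)" using Rfam_sub[OF assms(1)] unfolding AA_def by blast
      moreover have "finite (Pow (states F))" using assms(1) unfolding is_scd_def by simp
      ultimately show ?thesis by (rule finite_subset)
    qed
    define g where "g A = (SOME s'. shrink N s' = t \<and> reached F s' = A)" for A
    have g: "shrink N (g A) = t \<and> reached F (g A) = A" if "A \<in> AA" for A
    proof -
      have "\<exists>s'. shrink N s' = t \<and> reached F s' = A" using that unfolding AA_def Rfam_def by blast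
      then show ?thesis unfolding g_def by (rule someI_ex)
    qed
    have gL: "g A \<in> lang F" if "A \<in> AA" for A
      using g[OF that] that unfolding AA_def lang_def by auto
    obtain w where w: "\<forall>s'\<in>g ` AA. pump (lang F) N s' w"
      using common[of "g ` AA" "lang F" N s] finAA g gL hdN sL unfolding t_def by auto
    have wL: "w \<in> lang F1" and wout: "outputs F1 w \<subseteq> (\<Union>v\<in>A. out F v)" if "A \<in> AA" for A
    proof -
      have "pump (lang F) N (g A) w" using w that by blast
      then have "w \<in> lang F1 \<and> outputs F1 w \<subseteq> outputs F (g A)"
        using assms(5) gL[OF that] unfolding output_simulates_def by blast
      then show "w \<in> lang F1" "outputs F1 w \<subseteq> (\<Union>v\<in>A. out F v)"
        using g[OF that] unfolding outputs_def by auto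
    qed
    have "w \<in> lang F1" using wL Ain unfolding AA_def by blast
    then obtain v where v: "v \<in> reached F1 w" unfolding lang_def by blast
    then have "v \<in> states F1" using reached_states[OF assms(4)] by blast
    then have "out F1 v \<noteq> {}" using assms(4) unfolding is_scd_def by blast
    then have ne: "outputs F1 w \<noteq> {}" using v unfolding outputs_def by blast
    have "outputs F1 w \<subseteq> outI F (Rfam F N t)" using wout unfolding outI_def AA_def by blast
    then have Ine: "outI F (Rfam F N t) \<noteq> {}" using ne by blast
    have o2: "out2 F (Rfam F N t) = outI F (Rfam F N t)"
      using Ine Ain unfolding out2_def by auto
    have sub: "outI F (Rfam F N t) \<subseteq> outputs F s"
      using Ain unfolding outI_def outputs_def by blast
    show "\<exists>t'\<in>lang (F2 F N). shrink_rel (lang F) N s t'"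
      using tL sL unfolding shrink_rel_def t_def by blast
    fix t' assume "shrink_rel (lang F) N s t'"
    then have "t' = t" unfolding shrink_rel_def t_def by simp
    then show "t' \<in> lang (F2 F N)" "outputs (F2 F N) t' \<subseteq> outputs F s"
      using tL outt o2 sub by auto
  qed
  obtain G' :: "(nat, 'y, 'c) scd" where G': "is_scd G'" "lang G' = lang (F2 F N)"
    "\<forall>t. outputs G' t = outputs (F2 F N) t"
    using to_nat[OF F2_scd[OF assms(1)]] by blast
  have "output_simulates G' F (shrink_rel (lang F) N)"
    using sim G' unfolding output_simulates_def by simp
  then show ?thesis using G'(1) by blast
qed

end
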